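(* For integers $k\ge0$ put $\zeta(-k|z)=-\frac{B_{k+1}(z)}{k+1}$, and for $r\ge2$ and integers $k_1,\ldots,k_r\ge0$ define recursively \[ \zeta(-k_1,\ldots,-k_r|z)=-\frac{1}{k_r+1}\zeta(-k_1,\ldots,-k_{r-2},-k_{r-1}-k_r-1|z)-\frac12\zeta(-k_1,\ldots,-k_{r-2},-k_{r-1}-k_r|z) \] \[ +\sum_{q=1}^{k_r}(-k_r)_q\frac{B_{q+1}}{(q+1)!}\zeta(-k_1,\ldots,-k_{r-2},-k_{r-1}-k_r+q|z), \] and let the depth-zero value be $1$. Then, up to addition of a function of period $1$, these are the solutions of the system of difference equations \[ V(-k_1,\ldots,-k_r|z+1)-V(-k_1,\ldots,-k_r|z)=-z^{k_1}V(-k_2,\ldots,-k_r|z+1)\qquad(r\ge1,\ k_j\ge0); \] that is, the polynomials $\zeta(-k_1,\ldots,-k_r|z)$ satisfy this system, and for each fixed tuple any solution $V(-k_1,\ldots,-k_r|z)$ of the equation with right-hand side $-z^{k_1}\zeta(-k_2,\ldots,-k_r|z+1)$ differs from $\zeta(-k_1,\ldots,-k_r|z)$ by a function of period $1$.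
   Context: $B_n(z)$ denotes the $n$-th Bernoulli polynomial and $B_n=B_n(0)$ the $n$-th Bernoulli number. $(a)_q=a(a+1)\cdots(a+q-1)$ is the Pochhammer symbol. For $r=2$ the prefix $-k_1,\ldots,-k_{r-2}$ is empty. *)

theory Defs
  imports Complex_Main
begin

text \<open>Bernoulli numbers with the convention B_1 = -1/2 (so that B_n = B_n(0)),
  via the standard recurrence sum_{k<=n} (n+1 choose k) B_k = 0 for n >= 1.\<close>
fun bernoulli :: "nat \<Rightarrow> real" where
  "bernoulli n = (if n = 0 then 1
     else - (\<Sum>k<n. of_nat (Suc n choose k) * bernoulli k) / of_nat (Suc n))"

declare bernoulli.simps [simp del]

definition bernpoly :: "nat \<Rightarrow> complex \<Rightarrow> complex" where
  "bernpoly n z = (\<Sum>k\<le>n. of_nat (n choose k) * of_real (bernoulli k) * z ^ (n - k))"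

text \<open>mzeta [k1,...,kr] z stands for zeta(-k1,...,-kr | z); depth zero value is 1.
  The recursion acts on the last two entries (k_{r-1}, k_r); the list is taken
  apart from the end via rev.\<close>
function mzeta :: "nat list \<Rightarrow> complex \<Rightarrow> complex" where
  "mzeta ks z = (case rev ks of
      [] \<Rightarrow> 1
    | [k] \<Rightarrow> - bernpoly (k + 1) z / of_nat (k + 1)
    | b # a # rpre \<Rightarrow>
        - mzeta (rev rpre @ [a + b + 1]) z / of_nat (b + 1)
        - mzeta (rev rpre @ [a + b]) z / 2
        + (\<Sum>q = 1..b. pochhammer (- of_nat b) q * of_real (bernoulli (q + 1))
                        / of_nat (fact (q + 1)) * mzeta (rev rpre @ [a + b - q]) z))"
  by pat_completeness auto
termination
  by (relation "measure (\<lambda>(ks, z). length ks)") (auto dest!: arg_cong[where f = length])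

end

theory Submission imports Defs "HOL-Computational_Algebra.Formal_Power_Series" begin
unbundle fps_syntax

lemma bern_rec:
  assumes "n \<ge> 1"
  shows "(\<Sum>k\<le>n. of_nat (Suc n choose k) * bernoulli k) = 0"
proof -
  have "bernoulli n = - (\<Sum>k<n. of_nat (Suc n choose k) * bernoulli k) / of_nat (Suc n)"
    using assms by (subst bernoulli.simps) simp
  hence "of_nat (Suc n) * bernoulli n = - (\<Sum>k<n. of_nat (Suc n choose k) * bernoulli k)"
    by (simp add: field_simps)
  moreover have "(Suc n choose n) = Suc n" by simp
  ultimately show ?thesis by (simp add: lessThan_Suc_atMost[symmetric])
qed

definition Bf :: "complex fps" where
  "Bf = Abs_fps (\<lambda>n. of_real (bernoulli n) / fact n)"

lemma Bf_exp: "Bf * (fps_exp 1 - 1) = fps_X"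
proof (rule fps_ext)
  fix m
  show "(Bf * (fps_exp 1 - 1)) $ m = fps_X $ m"
  proof (cases m)
    case 0 then show ?thesis by (simp add: Bf_def)
  next
    case (Suc n)
    have "(Bf * (fps_exp 1 - 1)) $ m = (\<Sum>i=0..Suc n. Bf $ i * (fps_exp 1 - 1) $ (Suc n - i))"
      by (simp add: fps_mult_nth Suc)
    also have "\<dots> = (\<Sum>i\<le>n. of_real (bernoulli i) / (fact i * fact (Suc n - i)))"
      by (simp add: Bf_def atLeast0AtMost Suc_diff_le ac_simps)
    also have "\<dots> = (\<Sum>i\<le>n. of_real (of_nat (Suc n choose i) * bernoulli i)) / fact (Suc n)"
      unfolding sum_divide_distrib
    proof (intro sum.cong refl)
      fix i assume "i \<in> {..n}"
      hence C: "(of_nat (Suc n choose i) :: complex) = fact (Suc n) / (fact i * fact (Suc n - i))"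
        by (intro binomial_fact) auto
      have "of_real (of_nat (Suc n choose i) * bernoulli i) / fact (Suc n)
          = (of_nat (Suc n choose i) :: complex) * of_real (bernoulli i) / fact (Suc n)" by simp
      also have "\<dots> = of_real (bernoulli i) / (fact i * fact (Suc n - i))"
        unfolding C by (simp add: field_simps del: fact_Suc)
      finally show "of_real (bernoulli i) / (fact i * fact (Suc n - i)) =
          (of_real (of_nat (Suc n choose i) * bernoulli i) :: complex) / fact (Suc n)" by simp
    qed
    also have "\<dots> = of_real (\<Sum>i\<le>n. of_nat (Suc n choose i) * bernoulli i) / fact (Suc n)"
      by simp
    also have "\<dots> = fps_X $ m"
    proof (cases "n = 0")
      case True then show ?thesis by (simp add: Suc bernoulli.simps)
    next
      case False then show ?thesis using bern_rec[of n] by (simp add: Suc)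
    qed
    finally show ?thesis .
  qed
qed

lemma bern_odd:
  assumes "odd n" "n \<ge> 3"
  shows "bernoulli n = 0"
proof -
  define Bn :: "complex fps" where "Bn = Abs_fps (\<lambda>n. (-1)^n * of_real (bernoulli n) / fact n)"
  have "Bn * (fps_exp (-1) - 1) = - fps_X"
  proof (rule fps_ext)
    fix m
    have "(Bn * (fps_exp (-1) - 1)) $ m = (\<Sum>i=0..m. Bn $ i * (fps_exp (-1) - 1) $ (m - i))"
      by (simp add: fps_mult_nth)
    also have "\<dots> = (\<Sum>i=0..m. (-1)^m * (Bf $ i * (fps_exp 1 - 1) $ (m - i)))"
    proof (intro sum.cong refl)
      fix i assume "i \<in> {0..m}"
      hence "(-1::complex)^m = (-1)^i * (-1)^(m-i)" by (simp add: power_add[symmetric])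
      thus "Bn $ i * (fps_exp (-1) - 1) $ (m - i) = (-1)^m * (Bf $ i * (fps_exp 1 - 1) $ (m - i))"
        by (simp add: Bn_def Bf_def power_minus')
    qed
    also have "\<dots> = (-1)^m * (Bf * (fps_exp 1 - 1)) $ m"
      by (simp add: fps_mult_nth sum_distrib_left)
    also have "\<dots> = (- fps_X) $ m" by (simp add: Bf_exp)
    finally show "(Bn * (fps_exp (-1) - 1)) $ m = (- fps_X) $ m" .
  qed
  hence "Bn * (fps_exp (-1) - 1) * fps_exp 1 = - fps_X * fps_exp 1" by simp
  moreover have "fps_exp (-1) * fps_exp (1::complex) = 1"
    by (simp add: fps_exp_add_mult[symmetric])
  ultimately have "Bn * (1 - fps_exp 1) = - fps_X * fps_exp 1"
    by (simp add: algebra_simps)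
  hence "Bn * (fps_exp 1 - 1) = fps_X * (fps_exp 1 - 1) + fps_X"
    by (simp add: algebra_simps)
  hence "(Bn - fps_X) * (fps_exp 1 - 1) = fps_X"
    by (simp add: left_diff_distrib)
  hence "(Bn - fps_X) * (fps_exp 1 - 1) = Bf * (fps_exp 1 - 1)"
    by (simp only: Bf_exp)
  moreover have "fps_exp 1 - 1 \<noteq> (0::complex fps)"
    using fps_exp_eq_1_iff[of "1::complex"] by auto
  ultimately have "Bn - fps_X = Bf" by simp
  hence "(Bn - fps_X) $ n = Bf $ n" by simp
  with assms have "- of_real (bernoulli n) = (of_real (bernoulli n) :: complex)"
    by (simp add: Bn_def Bf_def)
  thus ?thesis by simp
qed

lemma bernpoly_egf: "Abs_fps (\<lambda>n. bernpoly n z / fact n) = Bf * fps_exp z"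
proof (rule fps_ext)
  fix n
  have "(Bf * fps_exp z) $ n = (\<Sum>i=0..n. of_real (bernoulli i) / fact i * (z ^ (n - i) / fact (n - i)))"
    by (simp add: fps_mult_nth Bf_def)
  also have "\<dots> = (\<Sum>i\<le>n. of_nat (n choose i) * of_real (bernoulli i) * z ^ (n - i)) / fact n"
    unfolding sum_divide_distrib atLeast0AtMost
  proof (intro sum.cong refl)
    fix i assume "i \<in> {..n}"
    hence C: "(of_nat (n choose i) :: complex) = fact n / (fact i * fact (n - i))"
      by (intro binomial_fact) auto
    show "of_real (bernoulli i) / fact i * (z ^ (n - i) / fact (n - i)) =
        of_nat (n choose i) * of_real (bernoulli i) * z ^ (n - i) / fact n"
      unfolding C by (simp add: field_simps)
  qed
  finally show "Abs_fps (\<lambda>n. bernpoly n z / fact n) $ n = (Bf * fps_exp z) $ n"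
    by (simp add: bernpoly_def)
qed

lemma bernpoly_diff: "bernpoly (Suc m) (z + 1) - bernpoly (Suc m) z = of_nat (Suc m) * z ^ m"
proof -
  have "Bf * fps_exp (z + 1) - Bf * fps_exp z = fps_X * fps_exp z"
  proof -
    have "Bf * fps_exp (z + 1) - Bf * fps_exp z = (Bf * (fps_exp 1 - 1)) * fps_exp z"
      by (simp add: fps_exp_add_mult algebra_simps)
    thus ?thesis by (simp add: Bf_exp)
  qed
  hence "(Bf * fps_exp (z + 1) - Bf * fps_exp z) $ Suc m = (fps_X * fps_exp z) $ Suc m" by simp
  hence "bernpoly (Suc m) (z + 1) / fact (Suc m) - bernpoly (Suc m) z / fact (Suc m) = z ^ m / fact m"
    by (simp only: fps_sub_nth bernpoly_egf[symmetric] fps_nth_Abs_fps fps_X_mult_nth) simp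
  hence "(bernpoly (Suc m) (z + 1) - bernpoly (Suc m) z) / fact (Suc m) = z ^ m / fact m"
    by (simp add: diff_divide_distrib)
  hence "bernpoly (Suc m) (z + 1) - bernpoly (Suc m) z = (z ^ m / fact m) * fact (Suc m)"
    by (simp add: divide_eq_eq del: fact_Suc)
  also have "\<dots> = of_nat (Suc m) * z ^ m" by simp
  finally show ?thesis .
qed

declare mzeta.simps [simp del]

lemma mz_nil: "mzeta [] z = 1"
  by (subst mzeta.simps) simp

lemma mz_one: "mzeta [k] z = - bernpoly (k + 1) z / of_nat (k + 1)"
  by (subst mzeta.simps) simp

definition Fop :: "nat \<Rightarrow> (nat \<Rightarrow> complex) \<Rightarrow> nat \<Rightarrow> complex" where
  "Fop b f a = - f (a + b + 1) / of_nat (b + 1) - f (a + b) / 2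
     + (\<Sum>q = 1..b. pochhammer (- of_nat b) q * of_real (bernoulli (q + 1))
                        / of_nat (fact (q + 1)) * f (a + b - q))"

lemma mz_two: "mzeta (pre @ [a, b]) z = Fop b (\<lambda>m. mzeta (pre @ [m]) z) a"
  by (subst mzeta.simps) (simp add: Fop_def)

lemma Fop_diff: "Fop b (\<lambda>m. f m - g m) a = Fop b f a - Fop b g a"
  by (simp add: Fop_def sum_subtractf algebra_simps diff_divide_distrib)

lemma Fop_mult: "Fop b (\<lambda>m. c * f m) a = c * Fop b f a"
  by (simp add: Fop_def sum_distrib_left algebra_simps)


lemma mz_one_diff: "mzeta [k] (z + 1) - mzeta [k] z = - (z ^ k)"
proof -
  have "mzeta [k] (z + 1) - mzeta [k] z = - (bernpoly (Suc k) (z + 1) - bernpoly (Suc k) z) / of_nat (Suc k)"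
    by (simp add: mz_one diff_divide_distrib)
  also have "\<dots> = - (z ^ k)" by (simp only: bernpoly_diff) (simp del: of_nat_Suc)
  finally show ?thesis .
qed

lemma bern1: "bernoulli 1 = - 1 / 2"
  by (simp add: bernoulli.simps)

lemma coeff_T:
  assumes "1 \<le> q" "q \<le> b"
  shows "pochhammer (- of_nat b) q * of_real (bernoulli (q + 1)) / of_nat (fact (q + 1))
       = - (of_nat (Suc b choose Suc q) * of_real (bernoulli (Suc q)) / of_nat (Suc b) :: complex)"
proof (cases "even q")
  case True
  hence "bernoulli (q + 1) = 0" using assms by (intro bern_odd) auto
  thus ?thesis by simp
next
  case False
  have g: "(of_nat b gchoose q :: complex) = (- 1) ^ q * pochhammer (- of_nat b) q / fact q"
    by (rule gbinomial_pochhammer)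
  have "pochhammer (- of_nat b) q = (- 1) ^ q * fact q * (of_nat b gchoose q :: complex)"
    unfolding g using False by simp
  hence P: "pochhammer (- of_nat b) q = - fact q * (of_nat (b choose q) :: complex)"
    using False by (simp add: binomial_gbinomial)
  have "of_nat (Suc q) * (of_nat (Suc b choose Suc q) :: complex) = of_nat (Suc b) * of_nat (b choose q)"
    using arg_cong[OF Suc_times_binomial[of q b], of "of_nat :: nat \<Rightarrow> complex"]
    by (simp only: of_nat_mult)
  hence S: "(of_nat (Suc b choose Suc q) :: complex) = of_nat (Suc b) * of_nat (b choose q) / of_nat (Suc q)"
    by (simp add: eq_divide_eq mult.commute del: of_nat_Suc binomial_Suc_Suc)
  have F: "(of_nat (fact (q + 1)) :: complex) = of_nat (Suc q) * fact q"
    by (simp add: algebra_simps)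
  show ?thesis unfolding P S F
    by (simp add: field_simps del: of_nat_Suc binomial_Suc_Suc fact_Suc)
qed

lemma K0: "Fop b (\<lambda>m. - (z ^ m)) 0 = bernpoly (Suc b) (z + 1) / of_nat (Suc b)"
proof -
  define S where "S = (\<Sum>q=1..b. of_nat (Suc b choose Suc q) * of_real (bernoulli (Suc q)) * z ^ (b - q))"
  have E1: "bernpoly (Suc b) z = z ^ Suc b + of_nat (Suc b) * of_real (bernoulli 1) * z ^ b + S"
  proof -
    have "bernpoly (Suc b) z = z ^ Suc b +
       (\<Sum>i\<le>b. of_nat (Suc b choose Suc i) * of_real (bernoulli (Suc i)) * z ^ (b - i))"
      unfolding bernpoly_def by (subst sum.atMost_Suc_shift) (simp add: bernoulli.simps)
    also have "(\<Sum>i\<le>b. of_nat (Suc b choose Suc i) * of_real (bernoulli (Suc i)) * z ^ (b - i))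
        = of_nat (Suc b) * of_real (bernoulli 1) * z ^ b + S"
      unfolding S_def atMost_atLeast0 by (subst sum.atLeast_Suc_atMost) simp_all
    finally show ?thesis by simp
  qed
  have E2: "Fop b (\<lambda>m. - (z ^ m)) 0 = z ^ Suc b / of_nat (Suc b) + z ^ b / 2 + S / of_nat (Suc b)"
  proof -
    have "(\<Sum>q = 1..b. pochhammer (- of_nat b) q * of_real (bernoulli (q + 1))
                        / of_nat (fact (q + 1)) * - (z ^ (0 + b - q)))
        = (\<Sum>q = 1..b. of_nat (Suc b choose Suc q) * of_real (bernoulli (Suc q)) * z ^ (b - q) / of_nat (Suc b))"
    proof (intro sum.cong refl)
      fix q assume "q \<in> {1..b}"
      hence "1 \<le> q" "q \<le> b" by auto
      show "pochhammer (- of_nat b) q * of_real (bernoulli (q + 1)) / of_nat (fact (q + 1)) * - (z ^ (0 + b - q))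
          = of_nat (Suc b choose Suc q) * of_real (bernoulli (Suc q)) * z ^ (b - q) / of_nat (Suc b)"
        unfolding coeff_T[OF \<open>1 \<le> q\<close> \<open>q \<le> b\<close>] by simp
    qed
    thus ?thesis unfolding Fop_def S_def sum_divide_distrib by simp
  qed
  have b1: "(of_real (bernoulli 1) :: complex) = -1/2" by (simp only: bern1) simp
  have "bernpoly (Suc b) (z + 1) = bernpoly (Suc b) z + of_nat (Suc b) * z ^ b"
    using bernpoly_diff[of b z] by (simp add: algebra_simps)
  hence "bernpoly (Suc b) (z + 1) / of_nat (Suc b) = (z ^ Suc b + of_nat (Suc b) * of_real (bernoulli 1) * z ^ b + S
       + of_nat (Suc b) * z ^ b) / of_nat (Suc b)" unfolding E1 by simp
  also have "\<dots> = z ^ Suc b / of_nat (Suc b) + z ^ b / 2 + S / of_nat (Suc b)"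
    unfolding b1 by (simp add: field_simps del: of_nat_Suc)
  finally show ?thesis unfolding E2 by simp
qed

lemma Kshift: "Fop b (\<lambda>m. - (z ^ m)) a = z ^ a * Fop b (\<lambda>m. - (z ^ m)) 0"
proof -
  have "(\<Sum>q = 1..b. pochhammer (- of_nat b) q * of_real (bernoulli (q + 1))
                        / of_nat (fact (q + 1)) * - (z ^ (a + b - q)))
      = z ^ a * (\<Sum>q = 1..b. pochhammer (- of_nat b) q * of_real (bernoulli (q + 1))
                        / of_nat (fact (q + 1)) * - (z ^ (0 + b - q)))"
    unfolding sum_distrib_left
  proof (intro sum.cong refl)
    fix q assume "q \<in> {1..b}"
    hence "a + b - q = a + (b - q)" by auto
    thus "pochhammer (- of_nat b) q * of_real (bernoulli (q + 1)) / of_nat (fact (q + 1)) * - (z ^ (a + b - q))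
       = z ^ a * (pochhammer (- of_nat b) q * of_real (bernoulli (q + 1)) / of_nat (fact (q + 1)) * - (z ^ (0 + b - q)))"
      by (simp add: power_add)
  qed
  thus ?thesis unfolding Fop_def by (simp add: algebra_simps power_add)
qed

lemma main_diff:
  "ks \<noteq> [] \<Longrightarrow> mzeta ks (z + 1) - mzeta ks z = - (z ^ hd ks) * mzeta (tl ks) (z + 1)"
proof (induction "length ks" arbitrary: ks z rule: less_induct)
  case less
  show ?case
  proof (cases "rev ks")
    case Nil thus ?thesis using less.prems by simp
  next
    case (Cons b r)
    show ?thesis
    proof (cases r)
      case Nil
      have "rev ks = [b]" using \<open>rev ks = b # r\<close> Nil by simp
      hence "rev (rev ks) = rev [b]" by (rule arg_cong)
      hence "ks = [b]" by simp
      thus ?thesis by (simp add: mz_one_diff mz_nil)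
    next
      case (Cons a r')
      define pre where "pre = rev r'"
      have "rev ks = b # a # r'" using \<open>rev ks = b # r\<close> Cons by simp
      hence "rev (rev ks) = rev (b # a # r')" by (rule arg_cong)
      hence ks: "ks = pre @ [a, b]" unfolding pre_def by simp
      have D: "mzeta ks (z + 1) - mzeta ks z = Fop b (\<lambda>m. mzeta (pre @ [m]) (z + 1) - mzeta (pre @ [m]) z) a"
        unfolding ks mz_two Fop_diff ..
      show ?thesis
      proof (cases pre)
        case Nil
        have "Fop b (\<lambda>m. mzeta (pre @ [m]) (z + 1) - mzeta (pre @ [m]) z) a = Fop b (\<lambda>m. - (z ^ m)) a"
          unfolding Nil by (simp add: mz_one_diff)
        also have "\<dots> = z ^ a * (bernpoly (Suc b) (z + 1) / of_nat (Suc b))"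
          by (simp only: Kshift[of b z a] K0)
        also have "\<dots> = - (z ^ hd ks) * mzeta (tl ks) (z + 1)"
          unfolding ks Nil by (simp add: mz_one)
        finally show ?thesis using D by simp
      next
        case (Cons h p')
        have "Fop b (\<lambda>m. mzeta (pre @ [m]) (z + 1) - mzeta (pre @ [m]) z) a
            = Fop b (\<lambda>m. - (z ^ h) * mzeta (p' @ [m]) (z + 1)) a"
        proof -
          have "\<And>m. mzeta (pre @ [m]) (z + 1) - mzeta (pre @ [m]) z = - (z ^ h) * mzeta (p' @ [m]) (z + 1)"
          proof -
            fix m
            have "length (pre @ [m]) < length ks" unfolding ks by simp
            from less.hyps[OF this] show "mzeta (pre @ [m]) (z + 1) - mzeta (pre @ [m]) z = - (z ^ h) * mzeta (p' @ [m]) (z + 1)"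
              unfolding Cons by simp
          qed
          thus ?thesis by simp
        qed
        also have "\<dots> = - (z ^ h) * Fop b (\<lambda>m. mzeta (p' @ [m]) (z + 1)) a"
          by (rule Fop_mult)
        also have "\<dots> = - (z ^ hd ks) * mzeta (tl ks) (z + 1)"
          unfolding ks Cons by (simp add: mz_two)
        finally show ?thesis using D by simp
      qed
    qed
  qed
qed

theorem theorem3p1:
  shows "(\<forall>ks z. ks \<noteq> [] \<longrightarrow>
            mzeta ks (z + 1) - mzeta ks z = - (z ^ hd ks) * mzeta (tl ks) (z + 1))
       \<and> (\<forall>ks (V :: complex \<Rightarrow> complex). ks \<noteq> [] \<longrightarrow>
            (\<forall>z. V (z + 1) - V z = - (z ^ hd ks) * mzeta (tl ks) (z + 1)) \<longrightarrow>
            (\<exists>p :: complex \<Rightarrow> complex. (\<forall>z. p (z + 1) = p z) \<and> (\<forall>z. V z = mzeta ks z + p z)))"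
proof (intro conjI allI impI)
  fix ks :: "nat list" and z :: complex
  assume "ks \<noteq> []"
  thus "mzeta ks (z + 1) - mzeta ks z = - (z ^ hd ks) * mzeta (tl ks) (z + 1)" by (rule main_diff)
next
  fix ks :: "nat list" and V :: "complex \<Rightarrow> complex"
  assume ne: "ks \<noteq> []" and V: "\<forall>z. V (z + 1) - V z = - (z ^ hd ks) * mzeta (tl ks) (z + 1)"
  show "\<exists>p :: complex \<Rightarrow> complex. (\<forall>z. p (z + 1) = p z) \<and> (\<forall>z. V z = mzeta ks z + p z)"
  proof (intro exI conjI allI)
    fix z :: complex
    have "V (z + 1) - V z = mzeta ks (z + 1) - mzeta ks z"
      using V main_diff[OF ne, of z] by simp
    thus "V (z + 1) - mzeta ks (z + 1) = V z - mzeta ks z" by (simp add: algebra_simps)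
  next
    fix z show "V z = mzeta ks z + (V z - mzeta ks z)" by simp
  qed
qed

end
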